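(* Uniformly for all real $\alpha\geqslant 3$ and $x>1$, $$\sum_{p\leqslant x}\frac{1}{(\log p)^\alpha}<(2\alpha)^\alpha\frac{x}{(\log x)^{\alpha+1}},$$ where the sum runs over primes $p$. *)

theory Defs
  imports Complex_Main "HOL-Computational_Algebra.Primes"
begin

end

theory Submission
  imports Defs "HOL-Analysis.Harmonic_Numbers"
begin

lemma choose_mid_le: "(2*m+1 choose m) \<le> 4^m"
proof -
  have s: "(2*m+1 choose m) = (2*m+1 choose (m+1))"
    using binomial_symmetric[of m "2*m+1"] by simp
  have "(\<Sum>k\<in>{m, m+1}. (2*m+1 choose k)) \<le> (\<Sum>k\<le>2*m+1. (2*m+1 choose k))"
    by (intro sum_mono2) auto
  also have "\<dots> = 2^(2*m+1)" by (rule choose_row_sum)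
  finally have "2 * (2*m+1 choose m) \<le> 2 * 4^m"
    using s by (simp add: power_mult power_add)
  then show ?thesis by simp
qed

lemma prod_primes_dvd:
  fixes N :: nat
  assumes "finite A" "\<And>p. p \<in> A \<Longrightarrow> prime p \<and> p dvd N"
  shows "\<Prod>A dvd N"
  using assms
proof (induction A rule: finite_induct)
  case empty then show ?case by simp
next
  case (insert p A)
  have "coprime p (\<Prod>A)"
  proof (rule prime_imp_coprime)
    show "prime p" using insert by auto
    show "\<not> p dvd \<Prod>A"
    proof
      assume "p dvd \<Prod>A"
      then obtain q where "q \<in> A" "p dvd q"
        using insert by (metis prime_dvd_prod_iff insertCI)
      then have "p = q" using insert by (metis insertCI primes_dvd_imp_eq)
      then show False using insert \<open>q \<in> A\<close> by simp
    qed
  qed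
  moreover have "p dvd N" "\<Prod>A dvd N" using insert by auto
  ultimately show ?case using insert by (simp add: divides_mult)
qed

definition primorial :: "nat \<Rightarrow> nat" where
  "primorial n = \<Prod>{p. prime p \<and> p \<le> n}"

lemma primorial_pos: "primorial n > 0"
  unfolding primorial_def by (intro prod_pos) (auto simp: prime_gt_0_nat)

lemma primorial_le: "primorial n \<le> 4^n"
proof (induction n rule: less_induct)
  case (less n)
  show ?case
  proof (cases "n \<le> 2")
    case True
    then have "n = 0 \<or> n = 1 \<or> n = 2" by auto
    moreover have "{p. prime p \<and> p \<le> (0::nat)} = {}" "{p. prime p \<and> p \<le> (1::nat)} = {}"
      "{p. prime p \<and> p \<le> (2::nat)} = {2}"
      by (auto simp: le_Suc_eq dest: prime_ge_2_nat)
    ultimately show ?thesis unfolding primorial_def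
      by (elim disjE) (simp_all del: Collect_empty_eq)
  next
    case False
    show ?thesis
    proof (cases "even n")
      case True
      then have "\<not> prime n" using False
        using prime_odd_nat[of n] by auto
      then have "{p. prime p \<and> p \<le> n} = {p. prime p \<and> p \<le> n - 1}"
        using False by (auto simp: le_diff_conv2) (metis antisym_conv1 less_Suc_eq_le Suc_pred' less_imp_diff_less not_le zero_less_iff_neq_zero)
      then have "primorial n = primorial (n-1)" unfolding primorial_def by simp
      also have "\<dots> \<le> 4^(n-1)" using less False by simp
      also have "\<dots> \<le> 4^n" by (intro power_increasing) auto
      finally show ?thesis .
    next
      case odd: False
      then obtain m where n: "n = 2*m+1" by (metis oddE)
      have m1: "m \<ge> 1" using n False by simp
      define A where "A = {p. prime p \<and> m+1 < p \<and> p \<le> n}"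
      have fin: "finite A" unfolding A_def by auto
      have split: "{p. prime p \<and> p \<le> n} = {p. prime p \<and> p \<le> m+1} \<union> A"
        unfolding A_def using n by auto
      have disj: "{p. prime p \<and> p \<le> m+1} \<inter> A = {}" unfolding A_def by auto
      have "primorial n = primorial (m+1) * \<Prod>A"
        unfolding primorial_def split by (rule prod.union_disjoint) (auto simp: fin A_def)
      moreover have "primorial (m+1) \<le> 4^(m+1)" using less.IH[of "m+1"] n m1 by simp
      moreover have "\<Prod>A \<le> 4^m"
      proof -
        have "\<Prod>A dvd (2*m+1 choose m)"
        proof (rule prod_primes_dvd[OF fin])
          fix p assume "p \<in> A"
          then have p: "prime p" "m+1 < p" "p \<le> 2*m+1" unfolding A_def n by auto
          have eq: "fact m * fact (m+1) * (2*m+1 choose m) = (fact (2*m+1) :: nat)"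
            using binomial_fact_lemma[of m "2*m+1"] by (simp add: mult_2)
          have "p dvd fact (2*m+1)" using p prime_dvd_fact_iff[of p "2*m+1"] by blast
          moreover have "\<not> p dvd fact m * fact (m+1)"
            using p prime_dvd_fact_iff[of p m] prime_dvd_fact_iff[of p "m+1"] prime_dvd_mult_iff[of p "fact m" "fact (m+1)"]
            by linarith
          ultimately show "prime p \<and> p dvd (2*m+1 choose m)"
            using p eq by (metis prime_dvd_mult_iff)
        qed
        then have "\<Prod>A \<le> (2*m+1 choose m)"
          by (rule dvd_imp_le) (simp add: zero_less_binomial)
        also have "\<dots> \<le> 4^m" by (rule choose_mid_le)
        finally show ?thesis .
      qed
      ultimately have "primorial n \<le> 4^(m+1) * 4^m" by (metis mult_le_mono)
      also have "\<dots> = 4^n" using n by (simp add: power_add[symmetric])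
      finally show ?thesis .
    qed
  qed
qed


lemma theta_le:
  fixes x :: real
  assumes "x \<ge> 0"
  shows "(\<Sum>p\<in>{p::nat. prime p \<and> real p \<le> x}. ln (real p)) \<le> ln 4 * x"
proof -
  define n where "n = nat \<lfloor>x\<rfloor>"
  have set: "{p::nat. prime p \<and> real p \<le> x} = {p. prime p \<and> p \<le> n}"
  proof -
    have "real p \<le> x \<longleftrightarrow> p \<le> n" for p
      unfolding n_def using assms by (simp add: le_nat_iff le_floor_iff)
    then show ?thesis by auto
  qed
  have "(\<Sum>p\<in>{p. prime p \<and> p \<le> n}. ln (real p)) = ln (\<Prod>p\<in>{p. prime p \<and> p \<le> n}. real p)"
    by (subst ln_prod) (auto dest: prime_gt_0_nat)
  also have "(\<Prod>p\<in>{p. prime p \<and> p \<le> n}. real p) = real (primorial n)"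
    unfolding primorial_def by simp
  also have "ln (real (primorial n)) \<le> ln (real (4^n))"
    using primorial_le[of n] primorial_pos[of n] by simp
  also have "ln (real (4^n)) = real n * ln 4" by (simp add: ln_realpow)
  also have "\<dots> \<le> x * ln 4" using assms unfolding n_def
    by (intro mult_right_mono) auto
  finally show ?thesis using set by (simp add: mult.commute)
qed

lemma ln_le_over_e:
  fixes y :: real
  assumes "y > 0"
  shows "ln y \<le> y / exp 1"
proof -
  have "ln (y / exp 1) \<le> y / exp 1 - 1"
    using assms by (intro ln_le_minus_one) auto
  then show ?thesis using assms by (simp add: ln_div)
qed

lemma e_ge: "exp 1 \<ge> (27/10::real)"
proof -
  have "(1 + 1 / real (100::nat)) ^ 100 \<le> exp 1"
    by (rule exp_ge_one_plus_x_over_n_power_n) auto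
  moreover have "(27/10::real) \<le> (1 + 1 / real (100::nat)) ^ 100" by (simp add: power_divide)
  ultimately show ?thesis by linarith
qed


lemma const_ineq:
  fixes A :: real
  assumes A: "A \<ge> 3"
  shows "ln 4 * 3 powr (A+1) + (3*(A+1)/(2*exp 1)) powr (A+1) * (1/ln 2) powr A
         < (2*A) powr A"
proof -
  define e where "e = exp (1::real)"
  define l where "l = ln (2::real)"
  define a where "a = A powr A"
  define t where "t = A - 3"
  have e: "e \<ge> 27/10" using e_ge unfolding e_def .
  have l: "l \<ge> 2/3" "l \<le> 25/36" unfolding l_def using ln2_ge_two_thirds ln2_le_25_over_36 by auto
  have ln4: "ln (4::real) = 2 * l" unfolding l_def
    using ln_realpow[of 2 2] by simp
  have apos: "a > 0" unfolding a_def using A by simp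
  have t: "t \<ge> 0" "A = 3 + t" unfolding t_def using A by auto
  have "3 powr (A+1) = 3 * 3 powr A" by (simp add: powr_add)
  also have "3 powr A \<le> a" unfolding a_def using A by (intro powr_mono2) auto
  finally have T1: "ln 4 * 3 powr (A+1) \<le> 6 * l * a" using ln4 l by simp
  have "(3*(A+1)/(2*e)) powr (A+1) = (3/(2*e)) powr (A+1) * (A+1) powr (A+1)"
    using A e by (subst powr_mult[symmetric]) (auto simp: field_simps)
  also have "(3/(2*e)) powr (A+1) = (3/(2*e)) * (3/(2*e)) powr A"
    using e by (simp add: powr_add)
  also have "(A+1) powr (A+1) = (A+1) * (A+1) powr A"
    using A by (simp add: powr_add)
  also have "(A+1) powr A = a * (1 + 1/A) powr A"
  proof -
    have "A + 1 = A * (1 + 1/A)" using A by (simp add: field_simps)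
    then show ?thesis unfolding a_def using A by (metis powr_mult less_eq_real_def order.trans zero_le_numeral
       add_nonneg_nonneg zero_le_one divide_nonneg_nonneg)
  qed
  finally have eq1: "(3*(A+1)/(2*e)) powr (A+1) = (3/(2*e)) * (3/(2*e)) powr A * ((A+1) * (a * (1 + 1/A) powr A))" .
  have "(1 + 1/A) powr A \<le> e" unfolding e_def using exp_1_gt_powr[of A] A by simp
  then have "(3/(2*e)) * (3/(2*e)) powr A * ((A+1) * (a * (1 + 1/A) powr A)) \<le> (3/(2*e)) * (3/(2*e)) powr A * ((A+1) * (a * e))"
    using A apos e by (intro mult_left_mono) auto
  then have "(3*(A+1)/(2*e)) powr (A+1) \<le> (3/(2*e)) * (3/(2*e)) powr A * ((A+1) * (a * e))"
    using eq1 by simp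
  then have "(3*(A+1)/(2*e)) powr (A+1) * (1/l) powr A
        \<le> (3/(2*e)) * (3/(2*e)) powr A * ((A+1) * (a * e)) * (1/l) powr A"
    by (intro mult_right_mono) auto
  also have "\<dots> = 3/2 * (A+1) * a * ((3/(2*e)) powr A * (1/l) powr A)"
    using e by (simp add: field_simps)
  also have "(3/(2*e)) powr A * (1/l) powr A = (3/(2*e*l)) powr A"
    using e l by (subst powr_mult[symmetric]) (auto simp: field_simps)
  also have "(3/(2*e*l)) powr A \<le> (5/6) powr A"
  proof (intro powr_mono2)
    have "e * l \<ge> 27/10 * (2/3)" using e l by (intro mult_mono) auto
    then show "3/(2*e*l) \<le> 5/6" using e l by (simp add: field_simps)
  qed (use A e l in auto)
  finally have T2: "(3*(A+1)/(2*e)) powr (A+1) * (1/l) powr A \<le> 3/2 * (A+1) * a * (5/6) powr A"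
    using A apos by (simp add: mult_left_mono)
  have "(5/6::real) powr A = (5/6) powr 3 * (5/6) powr t" using t by (simp add: powr_add)
  also have "(5/6::real) powr 3 = 125/216" by (simp add: powr_numeral power_divide)
  finally have p56: "(5/6::real) powr A = 125/216 * (5/6) powr t" .
  have "(2::real) powr A = 2 powr 3 * 2 powr t" using t by (simp add: powr_add)
  also have "(2::real) powr 3 = 8" by (simp add: powr_numeral)
  finally have p2: "(2::real) powr A = 8 * 2 powr t" .
  have "(12/5::real) powr t = exp (t * ln (12/5))" by (simp add: powr_def)
  also have "\<dots> \<ge> 1 + t * ln (12/5)" by (rule exp_ge_add_one_self)
  finally have g1: "(12/5::real) powr t \<ge> 1 + t * ln (12/5)" .
  have "ln (12/5::real) \<ge> ln 2" by simp
  then have "ln (12/5::real) \<ge> 1/4" using l unfolding l_def by linarith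
  then have "t * ln (12/5::real) \<ge> t / 4" using t by (simp add: mult_left_mono[of "1/4" _ t, simplified])
  with g1 have g2: "4 + t \<le> 4 * (12/5::real) powr t" by linarith
  have q1: "(A+1) * (5/6) powr A = 125/216 * ((4+t) * (5/6) powr t)" using p56 t by simp
  have q2: "(4+t) * (5/6::real) powr t \<le> 4 * (12/5) powr t * (5/6) powr t"
    using g2 by (intro mult_right_mono) auto
  have q3: "(12/5::real) powr t * (5/6) powr t = 2 powr t"
    by (subst powr_mult[symmetric]) auto
  have T3: "(A+1) * (5/6) powr A \<le> 125/216 * (4 * 2 powr t)"
    using q1 q2 q3 by (simp add: mult.assoc)
  have tp: "(2::real) powr t \<ge> 1" using t ge_one_powr_ge_zero by simp
  have "ln 4 * 3 powr (A+1) + (3*(A+1)/(2*exp 1)) powr (A+1) * (1/ln 2) powr A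
        \<le> 6 * l * a + 3/2 * a * ((A+1) * (5/6) powr A)"
    using T1 T2 unfolding e_def l_def by (simp add: algebra_simps)
  also have "\<dots> \<le> 6 * l * a + 3/2 * a * (125/216 * (4 * 2 powr t))"
    using T3 apos by (intro add_left_mono mult_left_mono) auto
  also have "\<dots> < a * (8 * 2 powr t)"
  proof -
    have "6 * l + 3/2 * (125/216 * (4 * 2 powr t)) < 8 * 2 powr t"
      using l tp by linarith
    then have "a * (6 * l + 3/2 * (125/216 * (4 * 2 powr t))) < a * (8 * 2 powr t)"
      using apos by (intro mult_strict_left_mono) auto
    then show ?thesis by (simp add: algebra_simps)
  qed
  also have "a * (8 * 2 powr t) = (2*A) powr A"
    unfolding a_def using p2 A by (simp add: powr_mult)
  finally show ?thesis .
qed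


theorem lemma5:
  fixes \<alpha> x :: real
  assumes "\<alpha> \<ge> 3" and "x > 1"
  shows "(\<Sum>p\<in>{p::nat. prime p \<and> real p \<le> x}. 1 / (ln (real p)) powr \<alpha>)
           < (2 * \<alpha>) powr \<alpha> * x / (ln x) powr (\<alpha> + 1)"
proof -
  define A where "A = \<alpha>"
  have A: "A \<ge> 3" using assms unfolding A_def by simp
  define L where "L = ln x"
  have L: "L > 0" unfolding L_def using assms by simp
  define P where "P = {p::nat. prime p \<and> real p \<le> x}"
  have finP: "finite P" unfolding P_def
    by (rule finite_subset[of _ "{..nat \<lceil>x\<rceil>}"]) (auto simp: nat_le_iff le_ceiling_iff, linarith)
  define c where "c = (1/ln 2) powr A"
  define Q where "Q = (\<lambda>p::nat. ln (real p) \<le> L/3)"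
  have termb: "1 / ln (real p) powr A \<le> ln (real p) * (3/L) powr (A+1) + (if Q p then c else 0)"
    if "p \<in> P" for p
  proof -
    have p2: "p \<ge> 2" using that unfolding P_def by (simp add: prime_ge_2_nat)
    define u where "u = ln (real p)"
    have u2: "u \<ge> ln 2" unfolding u_def using p2 by simp
    have l2: "ln (2::real) > 0" by simp
    have upos: "u > 0" using u2 l2 by linarith
    have nn: "u * (3/L) powr (A+1) \<ge> 0" using upos by simp
    have inv: "1 / u powr A = (1/u) powr A" using upos by (simp add: powr_divide)
    show ?thesis
    proof (cases "Q p")
      case True
      have h: "1/u \<le> 1/ln 2" using u2 l2 upos by (simp add: field_simps)
      have "(1/u) powr A \<le> (1/ln 2) powr A"
        using upos h A by (intro powr_mono2) auto
      then show ?thesis using True nn inv unfolding c_def u_def[symmetric] by simp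
    next
      case False
      then have uL: "u > L/3" unfolding Q_def u_def by simp
      have e1: "(1/u) powr A = u * (1/u) powr (A+1)"
        using upos by (simp add: powr_add)
      have h: "1/u \<le> 3/L" using uL upos L by (simp add: field_simps)
      have "(1/u) powr (A+1) \<le> (3/L) powr (A+1)"
        using upos h A by (intro powr_mono2) auto
      then have "u * (1/u) powr (A+1) \<le> u * (3/L) powr (A+1)"
        using upos by (intro mult_left_mono) auto
      with e1 show ?thesis using False inv unfolding u_def[symmetric] by simp
    qed
  qed
  have S1: "(\<Sum>p\<in>P. 1 / ln (real p) powr A)
      \<le> (3/L) powr (A+1) * (\<Sum>p\<in>P. ln (real p)) + c * real (card {p\<in>P. Q p})"
  proof -
    have "(\<Sum>p\<in>P. 1 / ln (real p) powr A) \<le> (\<Sum>p\<in>P. ln (real p) * (3/L) powr (A+1) + (if Q p then c else 0))"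
      by (intro sum_mono termb)
    also have "\<dots> = (3/L) powr (A+1) * (\<Sum>p\<in>P. ln (real p)) + (\<Sum>p\<in>P. if Q p then c else 0)"
      by (simp add: sum.distrib sum_distrib_right mult.commute)
    also have "(\<Sum>p\<in>P. if Q p then c else 0) = c * real (card {p\<in>P. Q p})"
      using finP by (simp add: sum.inter_filter[symmetric])
    finally show ?thesis .
  qed
  have theta: "(\<Sum>p\<in>P. ln (real p)) \<le> ln 4 * x"
    unfolding P_def using theta_le[of x] assms by simp
  define y where "y = x powr (1/3)"
  have ypos: "y > 0" unfolding y_def using assms by simp
  have card: "real (card {p\<in>P. Q p}) \<le> y"
  proof -
    have "{p\<in>P. Q p} \<subseteq> {1..nat \<lfloor>y\<rfloor>}"
    proof
      fix p assume "p \<in> {p\<in>P. Q p}"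
      then have p: "prime p" "ln (real p) \<le> L/3" unfolding P_def Q_def by auto
      have pp: "real p > 0" using p prime_gt_0_nat by simp
      have "real p = exp (ln (real p))" using pp by simp
      also have "\<dots> \<le> exp (L/3)" using p by simp
      also have "exp (L/3) = y" unfolding y_def L_def using assms by (simp add: powr_def)
      finally have "real p \<le> y" .
      then have "p \<le> nat \<lfloor>y\<rfloor>" using ypos by (simp add: le_nat_iff le_floor_iff)
      moreover have "p \<ge> 1" using pp by simp
      ultimately show "p \<in> {1..nat \<lfloor>y\<rfloor>}" by simp
    qed
    then have "card {p\<in>P. Q p} \<le> card {1..nat \<lfloor>y\<rfloor>}" by (intro card_mono) auto
    then have "real (card {p\<in>P. Q p}) \<le> real (nat \<lfloor>y\<rfloor>)" by simp
    also have "\<dots> \<le> y" using ypos by linarith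
    finally show ?thesis .
  qed
  define k where "k = 2 / (3 * (A+1))"
  have kpos: "k > 0" unfolding k_def using A by simp
  define K where "K = (3*(A+1)/(2*exp 1)) powr (A+1)"
  have Lbound: "L powr (A+1) * y \<le> K * x"
  proof -
    have "ln (x powr k) \<le> x powr k / exp 1" using assms by (intro ln_le_over_e) simp
    then have "k * L \<le> x powr k / exp 1" unfolding L_def using assms by (simp add: ln_powr)
    then have "L \<le> (3*(A+1)/(2*exp 1)) * x powr k" using kpos A unfolding k_def
      by (simp add: field_simps)
    then have "L powr (A+1) \<le> ((3*(A+1)/(2*exp 1)) * x powr k) powr (A+1)"
      using L A by (intro powr_mono2) auto
    also have "\<dots> = K * (x powr k) powr (A+1)" unfolding K_def using A
      by (subst powr_mult) auto
    also have "(x powr k) powr (A+1) = x powr (2/3)"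
    proof -
      have "k * (A+1) = 2/3" unfolding k_def using A by (simp add: field_simps)
      then show ?thesis by (simp only: powr_powr)
    qed
    finally have "L powr (A+1) \<le> K * x powr (2/3)" .
    then have "L powr (A+1) * y \<le> K * x powr (2/3) * y" using ypos by (intro mult_right_mono) auto
    also have "K * x powr (2/3) * y = K * x" unfolding y_def using assms
      by (simp add: mult.assoc powr_add[symmetric])
    finally show ?thesis .
  qed
  have LA: "L powr (A+1) > 0" using L by simp
  have "(\<Sum>p\<in>P. 1 / ln (real p) powr A) * L powr (A+1)
      \<le> ((3/L) powr (A+1) * (ln 4 * x) + c * y) * L powr (A+1)"
  proof (intro mult_right_mono)
    have "(3/L) powr (A+1) * (\<Sum>p\<in>P. ln (real p)) \<le> (3/L) powr (A+1) * (ln 4 * x)"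
      using theta by (intro mult_left_mono) auto
    moreover have "c * real (card {p\<in>P. Q p}) \<le> c * y" using card unfolding c_def
      by (intro mult_left_mono) auto
    ultimately show "(\<Sum>p\<in>P. 1 / ln (real p) powr A) \<le> (3/L) powr (A+1) * (ln 4 * x) + c * y"
      using S1 by linarith
  qed (use LA in auto)
  also have "\<dots> = 3 powr (A+1) * ln 4 * x + c * (L powr (A+1) * y)"
    using L by (simp add: powr_divide algebra_simps)
  also have "\<dots> \<le> 3 powr (A+1) * ln 4 * x + c * (K * x)"
    using Lbound unfolding c_def by (intro add_left_mono mult_left_mono) auto
  also have "\<dots> = (ln 4 * 3 powr (A+1) + K * c) * x" by (simp add: algebra_simps)
  also have "\<dots> < (2*A) powr A * x"
    using const_ineq[OF A] assms unfolding K_def c_def by (intro mult_strict_right_mono) auto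
  finally have "(\<Sum>p\<in>P. 1 / ln (real p) powr A) * L powr (A+1) < (2*A) powr A * x" .
  then have "(\<Sum>p\<in>P. 1 / ln (real p) powr A) < (2*A) powr A * x / L powr (A+1)"
    using LA by (simp add: field_simps)
  then show ?thesis unfolding A_def L_def P_def .
qed

end
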